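(* Let $H$ be a graph such that $L(H)$ satisfies the Abu-Khzam–Langston property, i.e. for every positive integer $t$, $\chi(L(H))\geq t$ implies that $L(H)$ has a $K_t$-immersion. Then for every integer $m\geq 2$, $L(mH)$ also satisfies this property: for every positive integer $t$, $\chi(L(mH))\geq t$ implies that $L(mH)$ has a $K_t$-immersion.
   Context: Graphs are finite and may have parallel edges but no loops. $\chi$ denotes the chromatic number. The line graph $L(H)$ of a graph $H$ is the simple graph whose vertex set is $E(H)$, in which two distinct edges of $H$ are adjacent iff they share at least one endpoint. For $m\geq 2$, $mH$ denotes the graph obtained from $H$ by replacing each edge $e$ by $m$ parallel copies of $e$. A graph $G$ has a $K_t$-immersion if there is an injective map $\phi$ from the vertex set of $K_t$ to $V(G)$ and, for each pair $u\neq v$ of vertices of $K_t$, a path in $G$ joining $\phi(u)$ and $\phi(v)$, such that these paths are pairwise edge-disjoint. *)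

theory Defs
  imports Main
begin

definition multigraph :: "'v set \<Rightarrow> 'e set \<Rightarrow> ('e \<Rightarrow> 'v set) \<Rightarrow> bool" where
  "multigraph V E ends \<longleftrightarrow> finite V \<and> finite E \<and>
     (\<forall>e\<in>E. ends e \<subseteq> V \<and> card (ends e) = 2)"

definition line_adj :: "('e \<Rightarrow> 'v set) \<Rightarrow> 'e \<Rightarrow> 'e \<Rightarrow> bool" where
  "line_adj ends e f \<longleftrightarrow> e \<noteq> f \<and> ends e \<inter> ends f \<noteq> {}"

text \<open>mH: each edge e replaced by m parallel copies (e,0),...,(e,m-1).\<close>
definition mult_edges :: "nat \<Rightarrow> 'e set \<Rightarrow> ('e \<times> nat) set" where
  "mult_edges m E = E \<times> {0..<m}"

definition mult_ends :: "('e \<Rightarrow> 'v set) \<Rightarrow> ('e \<times> nat) \<Rightarrow> 'v set" where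
  "mult_ends ends = (\<lambda>(e, i). ends e)"

text \<open>Simple graphs are given by a vertex set W and a (symmetric, irreflexive) adjacency.\<close>
definition proper_colouring :: "'a set \<Rightarrow> ('a \<Rightarrow> 'a \<Rightarrow> bool) \<Rightarrow> nat \<Rightarrow> ('a \<Rightarrow> nat) \<Rightarrow> bool" where
  "proper_colouring W adj k c \<longleftrightarrow> (\<forall>v\<in>W. c v < k) \<and> (\<forall>u\<in>W. \<forall>v\<in>W. adj u v \<longrightarrow> c u \<noteq> c v)"

definition chromatic_number :: "'a set \<Rightarrow> ('a \<Rightarrow> 'a \<Rightarrow> bool) \<Rightarrow> nat" where
  "chromatic_number W adj = (LEAST k. \<exists>c. proper_colouring W adj k c)"

definition is_path :: "'a set \<Rightarrow> ('a \<Rightarrow> 'a \<Rightarrow> bool) \<Rightarrow> 'a list \<Rightarrow> bool" where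
  "is_path W adj xs \<longleftrightarrow> xs \<noteq> [] \<and> distinct xs \<and> set xs \<subseteq> W \<and>
     (\<forall>k. Suc k < length xs \<longrightarrow> adj (xs ! k) (xs ! Suc k))"

definition path_edges :: "'a list \<Rightarrow> 'a set set" where
  "path_edges xs = {{xs ! k, xs ! Suc k} | k. Suc k < length xs}"

definition has_K_immersion :: "'a set \<Rightarrow> ('a \<Rightarrow> 'a \<Rightarrow> bool) \<Rightarrow> nat \<Rightarrow> bool" where
  "has_K_immersion W adj t \<longleftrightarrow> (\<exists>(\<phi>::nat \<Rightarrow> 'a) (P::nat \<Rightarrow> nat \<Rightarrow> 'a list).
     inj_on \<phi> {0..<t} \<and> \<phi> ` {0..<t} \<subseteq> W \<and>
     (\<forall>i j. i < j \<and> j < t \<longrightarrow>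
        is_path W adj (P i j) \<and> hd (P i j) = \<phi> i \<and> last (P i j) = \<phi> j) \<and>
     (\<forall>i j i' j'. i < j \<and> j < t \<and> i' < j' \<and> j' < t \<and> (i, j) \<noteq> (i', j') \<longrightarrow>
        path_edges (P i j) \<inter> path_edges (P i' j') = {}))"

definition AKL_property :: "'a set \<Rightarrow> ('a \<Rightarrow> 'a \<Rightarrow> bool) \<Rightarrow> bool" where
  "AKL_property W adj \<longleftrightarrow> (\<forall>t::nat. t \<ge> 1 \<longrightarrow> chromatic_number W adj \<ge> t \<longrightarrow> has_K_immersion W adj t)"

end

theory Submission
  imports Defs
begin
lemma modc0: "(i::nat) < m \<Longrightarrow> j < m \<Longrightarrow> (i+j) mod m = (if i + j < m then i + j else i + j - m)"
  by (simp add: mod_if le_mod_geq)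
lemma modc1: "(i::nat) < m \<Longrightarrow> j < m \<Longrightarrow> j' < m \<Longrightarrow> (i+j) mod m = (i+j') mod m \<Longrightarrow> j = j'"
  by (simp add: modc0 split: if_splits)
lemma modc2: "(i::nat) < m \<Longrightarrow> i' < m \<Longrightarrow> j < m \<Longrightarrow> (i+j) mod m = (i'+j) mod m \<Longrightarrow> i = i'"
  by (simp add: modc0 split: if_splits)

definition lab :: "nat \<Rightarrow> nat \<Rightarrow> nat \<Rightarrow> nat \<Rightarrow> nat \<Rightarrow> nat" where
 "lab m k i j l = (if l = k then j else if even k \<and> Suc l = k then (i+j) mod m else if even l then i else j)"

lemma lab_lt: "i < m \<Longrightarrow> j < m \<Longrightarrow> lab m k i j l < m"
  by (auto simp: lab_def)

lemma lab_inj: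
  assumes "l < k" "i<m" "j<m" "i'<m" "j'<m"
    "lab m k i j l = lab m k i' j' l" "lab m k i j (Suc l) = lab m k i' j' (Suc l)"
  shows "i = i' \<and> j = j'"
proof (cases "Suc l = k")
  case True
  have s1: "\<And>a b. lab m k a b (Suc l) = b" using True by (simp add: lab_def)
  have jj: "j = j'" using assms(7) unfolding s1 .
  show ?thesis
  proof (cases "even k")
    case True
    have "\<And>a b. lab m k a b l = (a + b) mod m" using True \<open>Suc l = k\<close> by (simp add: lab_def)
    then have "(i + j) mod m = (i' + j) mod m" using assms(6) jj by simp
    then show ?thesis using modc2[of i m i' j] assms jj by blast
  next
    case False
    then have "even l" using \<open>Suc l = k\<close> by (metis even_Suc)
    then have "\<And>a b. lab m k a b l = a" using False \<open>Suc l = k\<close> by (simp add: lab_def)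
    then show ?thesis using assms(6) jj by simp
  qed
next
  case False
  show ?thesis
  proof (cases "even k \<and> Suc (Suc l) = k")
    case True
    then have el: "even l" by auto
    have l1: "\<And>a b. lab m k a b l = a" using True el assms(1) by (simp add: lab_def)
    have l2: "\<And>a b. lab m k a b (Suc l) = (a + b) mod m" using True by (simp add: lab_def)
    have ii: "i = i'" using assms(6) unfolding l1 .
    have "(i + j) mod m = (i + j') mod m" using assms(7) ii unfolding l2 by simp
    then show ?thesis using modc1[of i m j j'] assms ii by blast
  next
    case c2: False
    show ?thesis
    proof (cases "even l")
      case True
      have l1: "\<And>a b. lab m k a b l = a" using True False c2 assms(1) by (simp add: lab_def)
      have l2: "\<And>a b. lab m k a b (Suc l) = b" using True False c2 assms(1) by (auto simp: lab_def)
      show ?thesis using assms(6,7) unfolding l1 l2 by simp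
    next
      case f: False
      have l1: "\<And>a b. lab m k a b l = b" using f False c2 assms(1) by (simp add: lab_def)
      have l2: "\<And>a b. lab m k a b (Suc l) = a" using f False c2 assms(1) by (auto simp: lab_def)
      show ?thesis using assms(6,7) unfolding l1 l2 by simp
    qed
  qed
qed

definition lift :: "nat \<Rightarrow> 'e list \<Rightarrow> nat \<Rightarrow> nat \<Rightarrow> ('e \<times> nat) list" where
 "lift m Q i j = map (\<lambda>l. (Q!l, lab m (length Q - 1) i j l)) [0..<length Q]"

lemma lift_length[simp]: "length (lift m Q i j) = length Q"
  by (simp add: lift_def)

lemma lift_nth[simp]: "l < length Q \<Longrightarrow> lift m Q i j ! l = (Q!l, lab m (length Q - 1) i j l)"
  by (simp add: lift_def)

lemma setcomp_cong: "(\<And>k. P k \<Longrightarrow> f k = g k) \<Longrightarrow> {f k | k. P k} = {g k | k. P k}"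
  by (metis)

lemma lift_edges: "path_edges (lift m Q i j) =
  {{(Q!l, lab m (length Q - 1) i j l), (Q!Suc l, lab m (length Q - 1) i j (Suc l))} | l. Suc l < length Q}"
proof -
  have "\<And>l. Suc l < length Q \<Longrightarrow> {lift m Q i j ! l, lift m Q i j ! Suc l} =
    {(Q!l, lab m (length Q - 1) i j l), (Q!Suc l, lab m (length Q - 1) i j (Suc l))}"
    by (simp add: Suc_lessD)
  then show ?thesis unfolding path_edges_def lift_length by (intro setcomp_cong) 
qed

lemma lab0: "1 \<le> k \<Longrightarrow> lab m k i j 0 = i"
  by (cases "k = 1") (auto simp: lab_def)

lemma lift_hd: "Suc 0 < length Q \<Longrightarrow> hd (lift m Q i j) = (hd Q, i)"
proof -
  assume a: "Suc 0 < length Q"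
  then have "lift m Q i j \<noteq> []" by (metis lift_length list.size(3) not_less0)
  then have "hd (lift m Q i j) = lift m Q i j ! 0" by (simp add: hd_conv_nth)
  also have "\<dots> = (Q!0, lab m (length Q - 1) i j 0)" using a by (subst lift_nth) auto
  also have "lab m (length Q - 1) i j 0 = i" using lab0[of "length Q - 1"] a by simp
  moreover have "Q \<noteq> []" using a by auto
  ultimately show ?thesis by (simp add: hd_conv_nth)
qed

lemma lift_last: "Suc 0 < length Q \<Longrightarrow> last (lift m Q i j) = (last Q, j)"
proof -
  assume a: "Suc 0 < length Q"
  then have "lift m Q i j \<noteq> []" by (metis lift_length list.size(3) not_less0)
  then have "last (lift m Q i j) = lift m Q i j ! (length Q - 1)" by (simp add: last_conv_nth)
  also have "\<dots> = (Q!(length Q - 1), j)" using a by (simp add: lab_def)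
  moreover have "Q \<noteq> []" using a by auto
  ultimately show ?thesis by (simp add: last_conv_nth)
qed

lemma line_adj_mult: "line_adj ends x y \<Longrightarrow> line_adj (mult_ends ends) (x,p) (y,q)"
  by (simp add: line_adj_def mult_ends_def)

lemma lift_path:
  assumes "is_path E (line_adj ends) Q" "i<m" "j<m"
  shows "is_path (mult_edges m E) (line_adj (mult_ends ends)) (lift m Q i j)"
proof -
  have d: "distinct Q" "Q \<noteq> []" "set Q \<subseteq> E" and a: "\<And>k. Suc k < length Q \<Longrightarrow> line_adj ends (Q!k) (Q!Suc k)"
    using assms(1) by (auto simp: is_path_def)
  have "distinct (lift m Q i j)"
    unfolding lift_def distinct_map
    using d(1) by (auto simp: inj_on_def nth_eq_iff_index_eq)
  moreover have "lift m Q i j \<noteq> []" using d(2) by (simp add: lift_def)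
  moreover have "set (lift m Q i j) \<subseteq> mult_edges m E"
    using d(3) assms(2,3) by (auto simp: lift_def mult_edges_def lab_lt)
  moreover have "line_adj (mult_ends ends) (lift m Q i j ! k) (lift m Q i j ! Suc k)"
    if "Suc k < length (lift m Q i j)" for k
  proof -
    have "Suc k < length Q" using that by simp
    then show ?thesis using a[of k] by (simp add: Suc_lessD line_adj_mult)
  qed
  ultimately show ?thesis unfolding is_path_def by blast
qed
lemma lift_edge_fst: assumes "e \<in> path_edges (lift m Q i j)" shows "fst ` e \<in> path_edges Q"
proof -
  from assms obtain l where l: "Suc l < length Q"
    "e = {(Q!l, lab m (length Q - 1) i j l), (Q!Suc l, lab m (length Q - 1) i j (Suc l))}"
    unfolding lift_edges by blast
  then have "fst ` e = {Q!l, Q!Suc l}" by simp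
  then show ?thesis using l(1) unfolding path_edges_def by blast
qed

lemma lift_edge_diff:
  assumes "distinct Q" "e \<in> path_edges (lift m Q i j)"
  shows "\<exists>x\<in>e. \<exists>y\<in>e. fst x \<noteq> fst y"
proof -
  from assms(2) obtain l where l: "Suc l < length Q"
    "e = {(Q!l, lab m (length Q - 1) i j l), (Q!Suc l, lab m (length Q - 1) i j (Suc l))}"
    unfolding lift_edges by blast
  have "Q!l \<noteq> Q!Suc l" using assms(1) l(1) by (simp add: nth_eq_iff_index_eq)
  then show ?thesis using l(2) by auto
qed

lemma lift_same:
  assumes "distinct Q" "i<m" "j<m" "i'<m" "j'<m"
    "e \<in> path_edges (lift m Q i j)" "e \<in> path_edges (lift m Q i' j')"
  shows "i = i' \<and> j = j'"
proof -
  let ?k = "length Q - 1"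
  from assms(6) obtain l where l: "Suc l < length Q"
    "e = {(Q!l, lab m ?k i j l), (Q!Suc l, lab m ?k i j (Suc l))}"
    unfolding lift_edges by blast
  from assms(7) obtain l' where l': "Suc l' < length Q"
    "e = {(Q!l', lab m ?k i' j' l'), (Q!Suc l', lab m ?k i' j' (Suc l'))}"
    unfolding lift_edges by blast
  have eq: "{(Q!l, lab m ?k i j l), (Q!Suc l, lab m ?k i j (Suc l))} =
     {(Q!l', lab m ?k i' j' l'), (Q!Suc l', lab m ?k i' j' (Suc l'))}" using l l' by simp
  show ?thesis
  proof (cases "Q!l = Q!l'")
    case True
    then have ll: "l = l'" using assms(1) l(1) l'(1) by (simp add: nth_eq_iff_index_eq)
    have ne: "Q!l \<noteq> Q!Suc l" using assms(1) l(1) by (simp add: nth_eq_iff_index_eq)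
    from eq[unfolded ll] ne ll have "lab m ?k i j l = lab m ?k i' j' l \<and> lab m ?k i j (Suc l) = lab m ?k i' j' (Suc l)"
      by (auto simp: doubleton_eq_iff)
    then show ?thesis using lab_inj[of l ?k i m j i' j'] assms l(1) by auto
  next
    case False
    then have "Q!l = Q!Suc l' \<and> Q!Suc l = Q!l'" using eq by (auto simp: doubleton_eq_iff)
    then have a: "Q!l = Q!Suc l'" and b: "Q!Suc l = Q!l'" by auto
    have "l = Suc l'" using a assms(1) l(1) l'(1) nth_eq_iff_index_eq by (metis Suc_lessD)
    moreover have "Suc l = l'" using b assms(1) l(1) l'(1) nth_eq_iff_index_eq by (metis Suc_lessD)
    ultimately show ?thesis by simp
  qed
qed

lemma immersion_mono:
  assumes "has_K_immersion W adj t" "t' \<le> t"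
  shows "has_K_immersion W adj t'"
proof -
  obtain \<phi> :: "nat \<Rightarrow> _" and P where h: "inj_on \<phi> {0..<t}" "\<phi> ` {0..<t} \<subseteq> W"
     "\<forall>i j. i < j \<and> j < t \<longrightarrow> is_path W adj (P i j) \<and> hd (P i j) = \<phi> i \<and> last (P i j) = \<phi> j"
     "\<forall>i j i' j'. i < j \<and> j < t \<and> i' < j' \<and> j' < t \<and> (i, j) \<noteq> (i', j') \<longrightarrow>
        path_edges (P i j) \<inter> path_edges (P i' j') = {}"
    using assms(1) unfolding has_K_immersion_def by (elim exE conjE) (rule that, assumption+)
  have "{0..<t'} \<subseteq> {0..<t}" using assms(2) by auto
  note sub = this
  show ?thesis unfolding has_K_immersion_def
  proof (rule exI[of _ \<phi>], rule exI[of _ P], intro conjI)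
    show "inj_on \<phi> {0..<t'}" using h(1) sub by (rule inj_on_subset)
    show "\<phi> ` {0..<t'} \<subseteq> W" using h(2) sub by blast
    show "\<forall>i j. i < j \<and> j < t' \<longrightarrow> is_path W adj (P i j) \<and> hd (P i j) = \<phi> i \<and> last (P i j) = \<phi> j"
    proof (intro allI impI)
      fix i j assume "i < j \<and> j < t'"
      then have "i < j \<and> j < t" using assms(2) by simp
      then show "is_path W adj (P i j) \<and> hd (P i j) = \<phi> i \<and> last (P i j) = \<phi> j" by (rule h(3)[rule_format])
    qed
    show "\<forall>i j i' j'. i < j \<and> j < t' \<and> i' < j' \<and> j' < t' \<and> (i, j) \<noteq> (i', j') \<longrightarrow>
        path_edges (P i j) \<inter> path_edges (P i' j') = {}"
    proof (intro allI impI)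
      fix i j i' j' assume "i < j \<and> j < t' \<and> i' < j' \<and> j' < t' \<and> (i, j) \<noteq> (i', j')"
      then have "i < j \<and> j < t \<and> i' < j' \<and> j' < t \<and> (i, j) \<noteq> (i', j')" using assms(2) by simp
      then show "path_edges (P i j) \<inter> path_edges (P i' j') = {}" by (rule h(4)[rule_format])
    qed
  qed
qed

lemma mdiv: "(i::nat) < m \<Longrightarrow> (a * m + i) div m = a"
  by simp

lemma chrom_mult:
  assumes "finite E" "m \<ge> 1"
  shows "chromatic_number (mult_edges m E) (line_adj (mult_ends ends)) \<le> m * chromatic_number E (line_adj ends)"
proof -
  obtain h where h: "bij_betw h E {0..<card E}" using ex_bij_betw_finite_nat[OF assms(1)] by blast
  have "proper_colouring E (line_adj ends) (card E) h"
    using h unfolding proper_colouring_def bij_betw_def inj_on_def line_adj_def by auto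
  then have ex: "\<exists>c. proper_colouring E (line_adj ends) (card E) c" by blast
  define s where "s = chromatic_number E (line_adj ends)"
  have "\<exists>c. proper_colouring E (line_adj ends) s c"
    unfolding s_def chromatic_number_def by (rule LeastI_ex) (use ex in blast)
  then obtain c0 where c0: "proper_colouring E (line_adj ends) s c0" by blast
  define c where "c = (\<lambda>(e::'a, i::nat). c0 e * m + i)"
  have "proper_colouring (mult_edges m E) (line_adj (mult_ends ends)) (m * s) c"
    unfolding proper_colouring_def
  proof (intro conjI ballI impI)
    fix v assume "v \<in> mult_edges m E"
    then obtain e i where v: "v = (e,i)" "e \<in> E" "i < m" by (auto simp: mult_edges_def)
    have "c0 e < s" using c0 v(2) by (auto simp: proper_colouring_def)
    then have "c0 e + 1 \<le> s" by simp
    then have "(c0 e + 1) * m \<le> s * m" by (rule mult_right_mono) simp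
    then show "c v < m * s" using v by (simp add: c_def algebra_simps)
  next
    fix u v assume u: "u \<in> mult_edges m E" and v: "v \<in> mult_edges m E"
      and a: "line_adj (mult_ends ends) u v"
    obtain e i where u': "u = (e,i)" "e \<in> E" "i < m" using u by (auto simp: mult_edges_def)
    obtain f j where v': "v = (f,j)" "f \<in> E" "j < m" using v by (auto simp: mult_edges_def)
    show "c u \<noteq> c v"
    proof (cases "e = f")
      case True
      then show ?thesis using a u' v' by (auto simp: c_def line_adj_def)
    next
      case False
      then have "line_adj ends e f" using a u' v' by (auto simp: line_adj_def mult_ends_def)
      then have "c0 e \<noteq> c0 f" using c0 u' v' by (auto simp: proper_colouring_def)
      moreover have "c u = c v \<Longrightarrow> c0 e = c0 f"
      proof -
        assume "c u = c v"
        then have "(c0 e * m + i) div m = (c0 f * m + j) div m" using u' v' by (simp add: c_def)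
        then show ?thesis using mdiv[OF u'(3)] mdiv[OF v'(3)] by simp
      qed
      ultimately show ?thesis by blast
    qed
  qed
  then have "\<exists>c. proper_colouring (mult_edges m E) (line_adj (mult_ends ends)) (m * s) c" by blast
  then have "chromatic_number (mult_edges m E) (line_adj (mult_ends ends)) \<le> m * s"
    unfolding chromatic_number_def by (rule Least_le)
  then show ?thesis by (simp add: s_def)
qed
lemma path_edges2: "path_edges [x, y] = {{x, y}}"
  unfolding path_edges_def by auto

lemma len2: "xs \<noteq> [] \<Longrightarrow> hd xs \<noteq> last xs \<Longrightarrow> Suc 0 < length xs"
  by (cases xs) auto

lemma blowup:
  assumes m: "m \<ge> 1" and imm: "has_K_immersion E (line_adj ends) s"
    and c2: "\<forall>e\<in>E. card (ends e) = 2"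
  shows "has_K_immersion (mult_edges m E) (line_adj (mult_ends ends)) (m * s)"
proof -
  obtain \<phi> :: "nat \<Rightarrow> _" and P where h: "inj_on \<phi> {0..<s}" "\<phi> ` {0..<s} \<subseteq> E"
     "\<forall>i j. i < j \<and> j < s \<longrightarrow> is_path E (line_adj ends) (P i j) \<and> hd (P i j) = \<phi> i \<and> last (P i j) = \<phi> j"
     "\<forall>i j i' j'. i < j \<and> j < s \<and> i' < j' \<and> j' < s \<and> (i, j) \<noteq> (i', j') \<longrightarrow>
        path_edges (P i j) \<inter> path_edges (P i' j') = {}"
    using imm unfolding has_K_immersion_def by (elim exE conjE) (rule that, assumption+)
  define \<phi>' where "\<phi>' = (\<lambda>n. (\<phi> (n div m), n mod m))"
  define P' where "P' = (\<lambda>n n'. if n div m = n' div m then [\<phi>' n, \<phi>' n']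
      else lift m (P (n div m) (n' div m)) (n mod m) (n' mod m))"
  have divlt: "n div m < s" if "n < m * s" for n
    using that by (simp add: less_mult_imp_div_less mult.commute)
  have modlt: "n mod m < m" for n using m by simp
  have inE: "\<phi>' n \<in> mult_edges m E" if "n < m * s" for n
    using h(2) divlt[OF that] modlt unfolding \<phi>'_def mult_edges_def by auto
  have inj: "n = n'" if "n < m * s" "n' < m * s" "\<phi>' n = \<phi>' n'" for n n'
  proof -
    have "\<phi> (n div m) = \<phi> (n' div m)" "n mod m = n' mod m" using that(3) by (auto simp: \<phi>'_def)
    then have "n div m = n' div m" using h(1) divlt[OF that(1)] divlt[OF that(2)]
      by (auto simp: inj_on_def)
    then show ?thesis using \<open>n mod m = n' mod m\<close> by (metis div_mult_mod_eq)
  qed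
  have base: "is_path E (line_adj ends) (P a b) \<and> hd (P a b) = \<phi> a \<and> last (P a b) = \<phi> b
     \<and> distinct (P a b) \<and> Suc 0 < length (P a b)" if "a < b" "b < s" for a b
  proof -
    have p: "is_path E (line_adj ends) (P a b)" "hd (P a b) = \<phi> a" "last (P a b) = \<phi> b"
      using h(3) that by auto
    have "a \<in> {0..<s}" "b \<in> {0..<s}" "a \<noteq> b" using that by auto
    then have "\<phi> a \<noteq> \<phi> b" using h(1) by (meson inj_on_contraD)
    moreover have "P a b \<noteq> []" using p(1) by (simp add: is_path_def)
    ultimately have "Suc 0 < length (P a b)" using p(2,3) len2 by metis
    then show ?thesis using p by (auto simp: is_path_def)
  qed
  have ordr: "n div m < n' div m" if "n < n'" "n div m \<noteq> n' div m" for n n'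
    using that div_le_mono[of n n' m] by simp
  have same_edge: "\<forall>x\<in>e. \<forall>y\<in>e. fst x = fst y" if "n div m = n' div m" "e \<in> path_edges (P' n n')" for n n' e
    using that by (auto simp: P'_def path_edges2 \<phi>'_def)
  show ?thesis unfolding has_K_immersion_def
  proof (rule exI[of _ \<phi>'], rule exI[of _ P'], intro conjI)
    show "inj_on \<phi>' {0..<m * s}" using inj by (auto simp: inj_on_def)
    show "\<phi>' ` {0..<m * s} \<subseteq> mult_edges m E" using inE by auto
    show "\<forall>i j. i < j \<and> j < m * s \<longrightarrow> is_path (mult_edges m E) (line_adj (mult_ends ends)) (P' i j) \<and>
        hd (P' i j) = \<phi>' i \<and> last (P' i j) = \<phi>' j"
    proof (intro allI impI)
      fix n n' assume a: "n < n' \<and> n' < m * s"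
      show "is_path (mult_edges m E) (line_adj (mult_ends ends)) (P' n n') \<and>
        hd (P' n n') = \<phi>' n \<and> last (P' n n') = \<phi>' n'"
      proof (cases "n div m = n' div m")
        case True
        have ne: "\<phi>' n \<noteq> \<phi>' n'" using inj[of n n'] a by auto
        have e: "\<phi> (n div m) \<in> E" using h(2) divlt[of n] a by auto
        then have "ends (\<phi> (n div m)) \<noteq> {}" using c2 by force
        then have adj: "line_adj (mult_ends ends) (\<phi>' n) (\<phi>' n')"
          using ne True by (simp add: line_adj_def mult_ends_def \<phi>'_def)
        have ins: "\<phi>' n \<in> mult_edges m E" "\<phi>' n' \<in> mult_edges m E" using inE a by auto
        have "is_path (mult_edges m E) (line_adj (mult_ends ends)) [\<phi>' n, \<phi>' n']"
          unfolding is_path_def using ne adj ins by (auto simp: less_Suc_eq)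
        then show ?thesis using True by (simp add: P'_def)
      next
        case False
        have ab: "n div m < n' div m" "n' div m < s" using ordr[of n n'] False a divlt[of n'] by auto
        note b = base[OF ab]
        have "is_path (mult_edges m E) (line_adj (mult_ends ends)) (lift m (P (n div m) (n' div m)) (n mod m) (n' mod m))"
          using lift_path b modlt by blast
        moreover have "hd (lift m (P (n div m) (n' div m)) (n mod m) (n' mod m)) = \<phi>' n"
          using b by (simp add: lift_hd \<phi>'_def)
        moreover have "last (lift m (P (n div m) (n' div m)) (n mod m) (n' mod m)) = \<phi>' n'"
          using b by (simp add: lift_last \<phi>'_def)
        ultimately show ?thesis using False by (simp add: P'_def)
      qed
    qed
    show "\<forall>i j i' j'. i < j \<and> j < m * s \<and> i' < j' \<and> j' < m * s \<and> (i, j) \<noteq> (i', j') \<longrightarrow>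
        path_edges (P' i j) \<inter> path_edges (P' i' j') = {}"
    proof (intro allI impI)
      fix n1 n2 n3 n4 assume a: "n1 < n2 \<and> n2 < m * s \<and> n3 < n4 \<and> n4 < m * s \<and> (n1, n2) \<noteq> (n3, n4)"
      show "path_edges (P' n1 n2) \<inter> path_edges (P' n3 n4) = {}"
      proof (rule ccontr)
        assume "path_edges (P' n1 n2) \<inter> path_edges (P' n3 n4) \<noteq> {}"
        then obtain e where e1: "e \<in> path_edges (P' n1 n2)" and e2: "e \<in> path_edges (P' n3 n4)" by blast
        show False
        proof (cases "n1 div m = n2 div m")
          case s1: True
          show False
          proof (cases "n3 div m = n4 div m")
            case s2: True
            have "{\<phi>' n1, \<phi>' n2} = {\<phi>' n3, \<phi>' n4}"
              using e1 e2 s1 s2 by (simp add: P'_def path_edges2)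
            then have "(\<phi>' n1 = \<phi>' n3 \<and> \<phi>' n2 = \<phi>' n4) \<or> (\<phi>' n1 = \<phi>' n4 \<and> \<phi>' n2 = \<phi>' n3)"
              by (simp add: doubleton_eq_iff)
            then have "(n1 = n3 \<and> n2 = n4) \<or> (n1 = n4 \<and> n2 = n3)"
              using inj a by (metis less_trans)
            then show False using a by auto
          next
            case s2: False
            have ab: "n3 div m < n4 div m" "n4 div m < s" using ordr[of n3 n4] s2 a divlt[of n4] by auto
            have "e \<in> path_edges (lift m (P (n3 div m) (n4 div m)) (n3 mod m) (n4 mod m))"
              using e2 s2 by (simp add: P'_def)
            then have "\<exists>x\<in>e. \<exists>y\<in>e. fst x \<noteq> fst y" using lift_edge_diff base[OF ab] by blast
            then show False using same_edge[OF s1 e1] by blast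
          qed
        next
          case s1: False
          have ab1: "n1 div m < n2 div m" "n2 div m < s" using ordr[of n1 n2] s1 a divlt[of n2] by auto
          have el1: "e \<in> path_edges (lift m (P (n1 div m) (n2 div m)) (n1 mod m) (n2 mod m))"
            using e1 s1 by (simp add: P'_def)
          show False
          proof (cases "n3 div m = n4 div m")
            case s2: True
            have "\<exists>x\<in>e. \<exists>y\<in>e. fst x \<noteq> fst y" using lift_edge_diff base[OF ab1] el1 by blast
            then show False using same_edge[OF s2 e2] by blast
          next
            case s2: False
            have ab2: "n3 div m < n4 div m" "n4 div m < s" using ordr[of n3 n4] s2 a divlt[of n4] by auto
            have el2: "e \<in> path_edges (lift m (P (n3 div m) (n4 div m)) (n3 mod m) (n4 mod m))"
              using e2 s2 by (simp add: P'_def)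
            show False
            proof (cases "(n1 div m, n2 div m) = (n3 div m, n4 div m)")
              case True
              then have d13: "n1 div m = n3 div m" and d24: "n2 div m = n4 div m" by auto
              have "n1 mod m = n3 mod m \<and> n2 mod m = n4 mod m"
                using lift_same[OF _ modlt modlt modlt modlt el1] el2 base[OF ab1] d13 d24 by auto
              then have "n1 = n3" "n2 = n4" using d13 d24 by (metis div_mult_mod_eq)+
              then show False using a by auto
            next
              case False
              have "fst ` e \<in> path_edges (P (n1 div m) (n2 div m))" using lift_edge_fst el1 by blast
              moreover have "fst ` e \<in> path_edges (P (n3 div m) (n4 div m))" using lift_edge_fst el2 by blast
              moreover have "path_edges (P (n1 div m) (n2 div m)) \<inter> path_edges (P (n3 div m) (n4 div m)) = {}"
                using h(4)[rule_format, of "n1 div m" "n2 div m" "n3 div m" "n4 div m"] ab1 ab2 False by auto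
              ultimately show False by blast
            qed
          qed
        qed
      qed
    qed
  qed
qed

theorem corollary1p3:
  fixes V :: "'v set" and E :: "'e set" and ends :: "'e \<Rightarrow> 'v set" and m :: nat
  assumes "multigraph V E ends"
    and "AKL_property E (line_adj ends)"
    and "m \<ge> 2"
  shows "AKL_property (mult_edges m E) (line_adj (mult_ends ends))"
  unfolding AKL_property_def
proof (intro allI impI)
  fix t :: nat
  assume t1: "t \<ge> 1" and tc: "chromatic_number (mult_edges m E) (line_adj (mult_ends ends)) \<ge> t"
  have fin: "finite E" and c2: "\<forall>e\<in>E. card (ends e) = 2" using assms(1) by (auto simp: multigraph_def)
  define s where "s = chromatic_number E (line_adj ends)"
  have m1: "m \<ge> 1" using assms(3) by simp
  have "t \<le> m * s" using tc chrom_mult[OF fin m1, of ends] unfolding s_def by linarith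
  then have "s \<ge> 1" using t1 by (cases s) auto
  then have "has_K_immersion E (line_adj ends) s"
    using assms(2) unfolding AKL_property_def s_def by blast
  then have "has_K_immersion (mult_edges m E) (line_adj (mult_ends ends)) (m * s)"
    using blowup[OF m1 _ c2] by blast
  then show "has_K_immersion (mult_edges m E) (line_adj (mult_ends ends)) t"
    using immersion_mono \<open>t \<le> m * s\<close> by blast
qed
end
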